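(* Let $G=(V,E)$ be a graph with a string representation $\varphi$, let $D\subseteq V$, suppose the robber is confined to $D$, and let $\pi$ be a shortest curve relative to $D$ in $\varphi$. Then five cops can prevent the robber from entering any vertex whose string intersects $\pi$, after a finite number of initial moves.
   Context: A string representation of $G$ assigns to each vertex $v$ a bounded curve $\varphi(v)\subseteq\mathbb{R}^2$ (continuous image of $[0,1]$) so that distinct $u,v$ are adjacent iff $\varphi(u)\cap\varphi(v)\ne\emptyset$. A path $P$ in $G$ is a shortest path relative to $D$ if it is a shortest path (between its endpoints) in $G[P\cup D]$. If $P$ is a shortest path relative to $D$ from $u$ to $v$, and $A\in\varphi(u)$, $B\in\varphi(v)$ are points, a curve $\pi\subseteq\bigcup_{p\in P}\varphi(p)$ from $A$ to $B$ such that for every $p\in P$ the set $\pi\cap\varphi(p)$ is connected, and these intersections appear along $\pi$ in the same order as the vertices of $P$, is a shortest curve of $P$ relative to $D$; a shortest curve relative to $D$ is a shortest curve of some shortest path relative to $D$. Game of cops and robber: cops are placed, then the robber; players alternate starting with cops; each piece stays or moves to an adjacent vertex; capture happens when a cop occupies the robber's vertex. The robber is confined to $D$ if the cops' strategy ensures he is immediately captured upon moving to any vertex outside $D$. *)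

theory Defs
  imports "HOL-Analysis.Analysis"
begin

definition is_curve :: "(real^2) set \<Rightarrow> bool" where
  "is_curve S \<longleftrightarrow> (\<exists>g. path g \<and> path_image g = S)"

definition string_rep :: "'v set \<Rightarrow> ('v \<Rightarrow> 'v \<Rightarrow> bool) \<Rightarrow> ('v \<Rightarrow> (real^2) set) \<Rightarrow> bool" where
  "string_rep V E \<phi> \<longleftrightarrow> (\<forall>v\<in>V. is_curve (\<phi> v)) \<and>
     (\<forall>u v. E u v \<longleftrightarrow> (u \<in> V \<and> v \<in> V \<and> u \<noteq> v \<and> \<phi> u \<inter> \<phi> v \<noteq> {}))"

definition walk_in :: "('v \<Rightarrow> 'v \<Rightarrow> bool) \<Rightarrow> 'v set \<Rightarrow> 'v list \<Rightarrow> bool" where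
  "walk_in E W ps \<longleftrightarrow> ps \<noteq> [] \<and> set ps \<subseteq> W \<and>
     (\<forall>i. Suc i < length ps \<longrightarrow> E (ps ! i) (ps ! Suc i))"

definition shortest_path_rel :: "'v set \<Rightarrow> ('v \<Rightarrow> 'v \<Rightarrow> bool) \<Rightarrow> 'v set \<Rightarrow> 'v list \<Rightarrow> bool" where
  "shortest_path_rel V E D P \<longleftrightarrow> walk_in E V P \<and> distinct P \<and>
     (\<forall>Q. walk_in E (set P \<union> D) Q \<and> hd Q = hd P \<and> last Q = last P \<longrightarrow> length P \<le> length Q)"

text \<open>pi is a shortest curve of P (from A to B): pi is a curve from A to B (parametrised by g)
  contained in the union of the strings of P, each pi \<inter> phi(p) is connected, and the
  intersections appear along pi in the order of P (their first and last appearance along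
  the parametrisation are ordered as the vertices of P).\<close>
definition shortest_curve_of :: "('v \<Rightarrow> (real^2) set) \<Rightarrow> 'v list \<Rightarrow> real^2 \<Rightarrow> real^2 \<Rightarrow> (real^2) set \<Rightarrow> bool" where
  "shortest_curve_of \<phi> P A B \<pi> \<longleftrightarrow>
     A \<in> \<phi> (hd P) \<and> B \<in> \<phi> (last P) \<and> \<pi> \<subseteq> (\<Union>p\<in>set P. \<phi> p) \<and>
     (\<forall>p\<in>set P. connected (\<pi> \<inter> \<phi> p)) \<and>
     (\<exists>g. path g \<and> path_image g = \<pi> \<and> pathstart g = A \<and> pathfinish g = B \<and>
        (\<forall>i<length P. {t\<in>{0..1}. g t \<in> \<phi> (P ! i)} \<noteq> {}) \<and>
        (\<forall>i j. i < j \<and> j < length P \<longrightarrow>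
            Inf {t\<in>{0..1}. g t \<in> \<phi> (P ! i)} \<le> Inf {t\<in>{0..1}. g t \<in> \<phi> (P ! j)} \<and>
            Sup {t\<in>{0..1}. g t \<in> \<phi> (P ! i)} \<le> Sup {t\<in>{0..1}. g t \<in> \<phi> (P ! j)}))"

definition shortest_curve_rel :: "'v set \<Rightarrow> ('v \<Rightarrow> 'v \<Rightarrow> bool) \<Rightarrow> ('v \<Rightarrow> (real^2) set) \<Rightarrow> 'v set \<Rightarrow> (real^2) set \<Rightarrow> bool" where
  "shortest_curve_rel V E \<phi> D \<pi> \<longleftrightarrow>
     (\<exists>P A B. shortest_path_rel V E D P \<and> shortest_curve_of \<phi> P A B \<pi>)"

text \<open>A robber play is a sequence r 0, r 1, ... (r 0 is the placement,
  r (i+1) the position after his i-th move).  A strategy for k cops maps the robber history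
  to the positions of cops 0..k-1; cop_pos s r i is the cop position after i cop moves
  (i = 0: placement), which depends on r 0 .. r (i-1).  Order: cops placed, robber placed,
  then cops move, robber moves, ...\<close>
definition robber_walk :: "'v set \<Rightarrow> ('v \<Rightarrow> 'v \<Rightarrow> bool) \<Rightarrow> (nat \<Rightarrow> 'v) \<Rightarrow> bool" where
  "robber_walk V E r \<longleftrightarrow> (\<forall>i. r i \<in> V) \<and> (\<forall>i. r (Suc i) = r i \<or> E (r i) (r (Suc i)))"

definition cop_pos :: "('v list \<Rightarrow> nat \<Rightarrow> 'v) \<Rightarrow> (nat \<Rightarrow> 'v) \<Rightarrow> nat \<Rightarrow> nat \<Rightarrow> 'v" where
  "cop_pos s r i = s (map r [0..<i])"

definition legal_cop_strategy :: "'v set \<Rightarrow> ('v \<Rightarrow> 'v \<Rightarrow> bool) \<Rightarrow> nat \<Rightarrow> ('v list \<Rightarrow> nat \<Rightarrow> 'v) \<Rightarrow> bool" where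
  "legal_cop_strategy V E k s \<longleftrightarrow> (\<forall>j<k. s [] j \<in> V) \<and>
     (\<forall>r. robber_walk V E r \<longrightarrow> (\<forall>i. \<forall>j<k.
        cop_pos s r (Suc i) j = cop_pos s r i j \<or> E (cop_pos s r i j) (cop_pos s r (Suc i) j)))"

text \<open>The robber, standing on r i (just placed / just moved there), is captured at that
  moment: either he stands on a cop, or a cop moves onto him in the cops' next move.\<close>
definition captured_at :: "nat \<Rightarrow> ('v list \<Rightarrow> nat \<Rightarrow> 'v) \<Rightarrow> (nat \<Rightarrow> 'v) \<Rightarrow> nat \<Rightarrow> bool" where
  "captured_at k s r i \<longleftrightarrow> (\<exists>j<k. cop_pos s r i j = r i \<or> cop_pos s r (Suc i) j = r i)"

definition confines :: "'v set \<Rightarrow> ('v \<Rightarrow> 'v \<Rightarrow> bool) \<Rightarrow> 'v set \<Rightarrow> nat \<Rightarrow> ('v list \<Rightarrow> nat \<Rightarrow> 'v) \<Rightarrow> bool" where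
  "confines V E D k s \<longleftrightarrow> (\<forall>r. robber_walk V E r \<and> r 0 \<in> D \<longrightarrow>
     (\<forall>i. r i \<notin> D \<longrightarrow> captured_at k s r i))"

end

theory Submission imports Defs begin

lemma walk_single[simp]: "walk_in E W [x] \<longleftrightarrow> x \<in> W"
  by (auto simp: walk_in_def)

lemma walk_cons2[simp]: "walk_in E W (x # y # xs) \<longleftrightarrow> x \<in> W \<and> E x y \<and> walk_in E W (y # xs)"
proof
  assume h: "walk_in E W (x # y # xs)"
  have "E x y" using h unfolding walk_in_def by (metis Suc_less_eq length_Cons nth_Cons_0 nth_Cons_Suc zero_less_Suc)
  moreover have "walk_in E W (y # xs)" unfolding walk_in_def
  proof (intro conjI allI impI)
    fix i assume "Suc i < length (y # xs)"
    then have "Suc (Suc i) < length (x#y#xs)" by simp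
    then have "E ((x#y#xs) ! Suc i) ((x#y#xs) ! Suc (Suc i))" using h unfolding walk_in_def
      by blast
    then show "E ((y # xs) ! i) ((y # xs) ! Suc i)" by simp
  qed (use h in \<open>auto simp: walk_in_def\<close>)
  ultimately show "x \<in> W \<and> E x y \<and> walk_in E W (y # xs)" using h by (auto simp: walk_in_def)
next
  assume h: "x \<in> W \<and> E x y \<and> walk_in E W (y # xs)"
  show "walk_in E W (x # y # xs)" unfolding walk_in_def
  proof (intro conjI allI impI)
    fix i assume "Suc i < length (x # y # xs)"
    then show "E ((x # y # xs) ! i) ((x # y # xs) ! Suc i)"
      using h unfolding walk_in_def by (cases i) auto
  qed (use h in \<open>auto simp: walk_in_def\<close>)
qed

lemma walk_app: "walk_in E W Q1 \<Longrightarrow> walk_in E W Q2 \<Longrightarrow> E (last Q1) (hd Q2) \<Longrightarrow> walk_in E W (Q1 @ Q2)"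
proof (induction Q1)
  case Nil then show ?case by (simp add: walk_in_def)
next
  case (Cons a Q1)
  show ?case
  proof (cases Q1)
    case Nil then show ?thesis using Cons.prems by (cases Q2) auto
  next
    case (Cons b Q1')
    then show ?thesis using Cons.prems Cons.IH by auto
  qed
qed

lemma walk_app_tl: assumes a: "walk_in E W Q1" "walk_in E W Q2" "last Q1 = hd Q2"
  shows "walk_in E W (Q1 @ tl Q2)"
proof (cases Q2)
  case Nil then show ?thesis using a by (simp add: walk_in_def)
next
  case (Cons h t)
  show ?thesis
  proof (cases t)
    case Nil then show ?thesis using a Cons by simp
  next
    case (Cons h2 t2)
    then show ?thesis using a \<open>Q2 = h # t\<close> by (auto intro!: walk_app)
  qed
qed

lemma walk_take: "walk_in E W P \<Longrightarrow> walk_in E W (take (Suc j) P)"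
  unfolding walk_in_def by (auto dest: in_set_takeD)

lemma walk_drop: "walk_in E W P \<Longrightarrow> j < length P \<Longrightarrow> walk_in E W (drop j P)"
  unfolding walk_in_def by (auto dest: in_set_dropD)

definition reach :: "('v \<Rightarrow> 'v \<Rightarrow> bool) \<Rightarrow> 'v set \<Rightarrow> 'v \<Rightarrow> 'v \<Rightarrow> bool" where
  "reach E H p0 v \<longleftrightarrow> (\<exists>Q. walk_in E H Q \<and> hd Q = p0 \<and> last Q = v)"

definition dd :: "('v \<Rightarrow> 'v \<Rightarrow> bool) \<Rightarrow> 'v set \<Rightarrow> 'v \<Rightarrow> 'v \<Rightarrow> nat" where
  "dd E H p0 v = (LEAST n. \<exists>Q. walk_in E H Q \<and> hd Q = p0 \<and> last Q = v \<and> length Q = Suc n)"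

lemma dd_ex:
  assumes "reach E H p0 v"
  obtains Q where "walk_in E H Q" "hd Q = p0" "last Q = v" "length Q = Suc (dd E H p0 v)"
proof -
  obtain Q where Q: "walk_in E H Q" "hd Q = p0" "last Q = v" using assms reach_def by metis
  then have "length Q = Suc (length Q - 1)" by (cases Q) (auto simp: walk_in_def)
  with Q have "\<exists>n Q. walk_in E H Q \<and> hd Q = p0 \<and> last Q = v \<and> length Q = Suc n" by blast
  then have "\<exists>Q. walk_in E H Q \<and> hd Q = p0 \<and> last Q = v \<and> length Q = Suc (dd E H p0 v)"
    unfolding dd_def by (rule LeastI_ex)
  then show ?thesis using that by blast
qed

lemma dd_le:
  assumes "walk_in E H Q" "hd Q = p0" "last Q = v" "length Q = Suc n"
  shows "dd E H p0 v \<le> n"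
  unfolding dd_def by (rule Least_le) (use assms in blast)

lemma reach_step:
  assumes "reach E H p0 u" "E u v" "v \<in> H"
  shows "reach E H p0 v \<and> dd E H p0 v \<le> Suc (dd E H p0 u)"
proof -
  obtain Q where Q: "walk_in E H Q" "hd Q = p0" "last Q = u" "length Q = Suc (dd E H p0 u)"
    using dd_ex[OF assms(1)] by blast
  have w: "walk_in E H (Q @ [v])" using Q assms by (intro walk_app) auto
  have h: "hd (Q @ [v]) = p0" using Q by (cases Q) (auto simp: walk_in_def)
  show ?thesis
  proof
    show "reach E H p0 v" unfolding reach_def using w h by (intro exI[of _ "Q @ [v]"]) auto
    show "dd E H p0 v \<le> Suc (dd E H p0 u)" using w h Q by (intro dd_le[of E H "Q @ [v]"]) auto
  qed
qed

definition FF :: "('v \<Rightarrow> 'v \<Rightarrow> bool) \<Rightarrow> 'v set \<Rightarrow> 'v list \<Rightarrow> 'v \<Rightarrow> nat" where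
  "FF E H P v = (if reach E H (hd P) v then min (dd E H (hd P) v) (length P - 1) else 0)"

lemma FF_bound: "FF E H P v \<le> length P - 1"
  by (simp add: FF_def)

lemma FF_lip:
  assumes sym: "\<And>a b. E a b \<Longrightarrow> E b a" and "u \<in> H" "v \<in> H" "u = v \<or> E u v"
  shows "FF E H P v \<le> Suc (FF E H P u)"
proof (cases "u = v")
  case True then show ?thesis by simp
next
  case False
  then have e: "E u v" using assms by blast
  show ?thesis
  proof (cases "reach E H (hd P) u")
    case True
    with reach_step[OF True e \<open>v \<in> H\<close>] show ?thesis by (auto simp: FF_def)
  next
    case False
    have "\<not> reach E H (hd P) v"
    proof
      assume "reach E H (hd P) v"
      from reach_step[OF this sym[OF e] \<open>u \<in> H\<close>] False show False by blast
    qed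
    then show ?thesis by (simp add: FF_def)
  qed
qed

lemma FF_path:
  assumes sym: "\<And>a b. E a b \<Longrightarrow> E b a"
    and sp: "shortest_path_rel V E D P" and H: "H = set P \<union> D"
    and v: "v \<in> H" and j: "j < length P" and vj: "v = P ! j \<or> E v (P ! j)"
  shows "FF E H P v \<le> Suc j \<and> j \<le> Suc (FF E H P v)"
proof -
  have wP: "walk_in E V P" and shortest: "\<And>Q. walk_in E H Q \<Longrightarrow> hd Q = hd P \<Longrightarrow> last Q = last P \<Longrightarrow> length P \<le> length Q"
    using sp H unfolding shortest_path_rel_def by auto
  have wPH: "walk_in E H P" using wP H unfolding walk_in_def by auto
  have wt: "walk_in E H (take (Suc j) P)" by (rule walk_take[OF wPH])
  have ht: "hd (take (Suc j) P) = hd P" by simp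
  have lt: "last (take (Suc j) P) = P ! j" using j by (simp add: take_Suc_conv_app_nth)
  have lent: "length (take (Suc j) P) = Suc j" using j by simp
  have R: "reach E H (hd P) v \<and> dd E H (hd P) v \<le> Suc j"
  proof (cases "v = P ! j")
    case True
    then have "reach E H (hd P) v" unfolding reach_def using wt ht lt by blast
    moreover have "dd E H (hd P) v \<le> j" using dd_le[OF wt ht _ lent] lt True by simp
    ultimately show ?thesis by simp
  next
    case False
    then have e: "E (P ! j) v" using vj sym by blast
    have r0: "reach E H (hd P) (P ! j)" unfolding reach_def using wt ht lt by blast
    have "dd E H (hd P) (P ! j) \<le> j" using dd_le[OF wt ht lt lent] .
    with reach_step[OF r0 e v] show ?thesis by simp
  qed
  obtain Q where Q: "walk_in E H Q" "hd Q = hd P" "last Q = v" "length Q = Suc (dd E H (hd P) v)"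
    using dd_ex R by metis
  have wd: "walk_in E H (drop j P)" by (rule walk_drop[OF wPH j])
  have hdd: "hd (drop j P) = P ! j" using j by (simp add: hd_drop_conv_nth)
  have Qne: "Q \<noteq> []" using Q by (auto simp: walk_in_def)
  have "j \<le> Suc (dd E H (hd P) v)"
  proof (cases "v = P ! j")
    case True
    have w: "walk_in E H (Q @ tl (drop j P))" using walk_app_tl[OF Q(1) wd] Q(3) hdd True by simp
    have "length P \<le> length (Q @ tl (drop j P))"
    proof (rule shortest[OF w])
      show "hd (Q @ tl (drop j P)) = hd P" using Q Qne by simp
      show "last (Q @ tl (drop j P)) = last P"
      proof (cases "tl (drop j P) = []")
        case True
        then have "drop j P = [P ! j]" using hdd j
          by (metis Cons_nth_drop_Suc drop_Suc list.sel(3))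
        then have "last P = P ! j" using j by (metis last_drop last_ConsL)
        then show ?thesis using True Q \<open>v = P ! j\<close> by simp
      next
        case False
        then have "last (tl (drop j P)) = last P" using j
          by (metis drop_Suc last_drop length_drop tl_drop zero_less_diff Suc_lessI drop_eq_Nil2 not_less tl_Nil)
        then show ?thesis using False by simp
      qed
    qed
    then show ?thesis using Q j by simp
  next
    case False
    then have e: "E v (P ! j)" using vj by blast
    have w: "walk_in E H (Q @ drop j P)" using walk_app[OF Q(1) wd] Q(3) hdd e by simp
    have "length P \<le> length (Q @ drop j P)"
      by (rule shortest[OF w]) (use Q Qne j in auto)
    then show ?thesis using Q j by simp
  qed
  then show ?thesis using R j by (auto simp: FF_def)
qed

definition idx :: "nat \<Rightarrow> nat \<Rightarrow> nat \<Rightarrow> nat" where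
  "idx L T j = min (T + j - 2) (L - 1)"

definition mv :: "('v \<Rightarrow> 'v \<Rightarrow> bool) \<Rightarrow> 'v \<Rightarrow> 'v \<Rightarrow> 'v \<Rightarrow> 'v" where
  "mv E c x d = (if c = x \<or> E c x then x else if c = d \<or> E c d then d else c)"

fun stp :: "('v \<Rightarrow> 'v \<Rightarrow> bool) \<Rightarrow> 'v list \<Rightarrow> ('v \<Rightarrow> nat) \<Rightarrow> 'v list \<Rightarrow> nat \<times> (nat \<Rightarrow> 'v)" where
  "stp E P F [] = (0, \<lambda>j. P ! idx (length P) 0 j)"
| "stp E P F (x # ys) = (let T' = min (Suc (fst (stp E P F ys))) (F x) in
      (T', \<lambda>j. mv E (snd (stp E P F ys) j) x (P ! idx (length P) T' j)))"

theorem corollary2: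
  fixes V :: "'v set" and E :: "'v \<Rightarrow> 'v \<Rightarrow> bool" and \<phi> :: "'v \<Rightarrow> (real^2) set"
    and D :: "'v set" and \<pi> :: "(real^2) set"
    and k :: nat and s :: "'v list \<Rightarrow> nat \<Rightarrow> 'v"
  assumes "finite V" and "string_rep V E \<phi>" and "D \<subseteq> V"
    and "legal_cop_strategy V E k s" and "confines V E D k s"
    and "shortest_curve_rel V E \<phi> D \<pi>"
  shows "\<exists>s5. legal_cop_strategy V E 5 s5 \<and>
    (\<forall>r. robber_walk V E r \<and> r 0 \<in> D \<longrightarrow>
      (\<exists>N. \<forall>i\<ge>N. (\<exists>t\<le>i. captured_at k s r t \<or> captured_at 5 s5 r t) \<or>
                  (\<phi> (r i) \<inter> \<pi> \<noteq> {} \<longrightarrow> captured_at 5 s5 r i)))"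
proof -
  have Edef: "\<And>u v. E u v \<longleftrightarrow> (u \<in> V \<and> v \<in> V \<and> u \<noteq> v \<and> \<phi> u \<inter> \<phi> v \<noteq> {})"
    using assms(2) unfolding string_rep_def by blast
  have sym: "\<And>a b. E a b \<Longrightarrow> E b a" using Edef by blast
  obtain P A B where sp: "shortest_path_rel V E D P" and sc: "shortest_curve_of \<phi> P A B \<pi>"
    using assms(6) unfolding shortest_curve_rel_def by blast
  define H where "H = set P \<union> D"
  define L where "L = length P"
  have wP: "walk_in E V P" using sp unfolding shortest_path_rel_def by blast
  have Pne: "P \<noteq> []" using wP unfolding walk_in_def by blast
  have L1: "1 \<le> L" using Pne unfolding L_def by (cases P) auto
  have PV: "set P \<subseteq> V" using wP unfolding walk_in_def by blast
  define F where "F = FF E H P"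
  define s5 where "s5 = (\<lambda>xs. snd (stp E P F (rev xs)))"
  define TT where "TT = (\<lambda>r i. fst (stp E P F (rev (map r [0..<i]))))"
  have C0: "\<And>r j. cop_pos s5 r 0 j = P ! idx L 0 j"
    by (simp add: cop_pos_def s5_def L_def)
  have T0: "\<And>r. TT r 0 = 0" by (simp add: TT_def)
  have TS: "\<And>r i. TT r (Suc i) = min (Suc (TT r i)) (F (r i))"
    by (simp add: TT_def Let_def)
  have CS: "\<And>r i j. cop_pos s5 r (Suc i) j = mv E (cop_pos s5 r i j) (r i) (P ! idx L (TT r (Suc i)) j)"
    by (simp add: TT_def Let_def cop_pos_def s5_def L_def)
  have idxL: "\<And>T j. idx L T j < L" using L1 by (simp add: idx_def)
  have Pstep: "\<And>a. Suc a < L \<Longrightarrow> E (P ! a) (P ! Suc a)" using wP unfolding walk_in_def L_def by blast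
  have Padj: "\<And>a b. a < L \<Longrightarrow> b < L \<Longrightarrow> b \<le> Suc a \<Longrightarrow> a \<le> Suc b \<Longrightarrow> P ! a = P ! b \<or> E (P ! a) (P ! b)"
  proof -
    fix a b assume "a < L" "b < L" "b \<le> Suc a" "a \<le> Suc b"
    then have "a = b \<or> b = Suc a \<or> a = Suc b" by arith
    then show "P ! a = P ! b \<or> E (P ! a) (P ! b)"
      using Pstep sym \<open>a < L\<close> \<open>b < L\<close> by blast
  qed
  have legal: "legal_cop_strategy V E 5 s5"
    unfolding legal_cop_strategy_def
  proof (intro conjI allI impI)
    fix j :: nat
    show "s5 [] j \<in> V" using C0[of undefined j] idxL PV L_def unfolding cop_pos_def
      by (metis list.simps(8) nth_mem subsetD upt_0)
  next
    fix r i j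
    show "cop_pos s5 r (Suc i) j = cop_pos s5 r i j \<or> E (cop_pos s5 r i j) (cop_pos s5 r (Suc i) j)"
      unfolding CS mv_def by auto
  qed
  show ?thesis
  proof (intro exI[of _ s5] conjI allI impI)
    show "legal_cop_strategy V E 5 s5" by (rule legal)
  next
    fix r assume rw: "robber_walk V E r \<and> r 0 \<in> D"
    show "\<exists>N. \<forall>i\<ge>N. (\<exists>t\<le>i. captured_at k s r t \<or> captured_at 5 s5 r t) \<or>
                  (\<phi> (r i) \<inter> \<pi> \<noteq> {} \<longrightarrow> captured_at 5 s5 r i)"
    proof (intro exI[of _ L] allI impI)
      fix i assume iL: "L \<le> i"
      show "(\<exists>t\<le>i. captured_at k s r t \<or> captured_at 5 s5 r t) \<or>
                  (\<phi> (r i) \<inter> \<pi> \<noteq> {} \<longrightarrow> captured_at 5 s5 r i)"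
      proof (cases "\<exists>t\<le>i. captured_at k s r t \<or> captured_at 5 s5 r t")
        case True then show ?thesis by blast
      next
        case False
        then have nc: "\<not> (\<exists>t\<le>i. captured_at k s r t \<or> captured_at 5 s5 r t)" by blast
        have rD: "\<And>t. t \<le> i \<Longrightarrow> r t \<in> D" using assms(5) rw nc unfolding confines_def by blast
        have rH: "\<And>t. t \<le> i \<Longrightarrow> r t \<in> H" using rD H_def by blast
        have rstep: "\<And>t. r (Suc t) = r t \<or> E (r t) (r (Suc t))" using rw unfolding robber_walk_def by blast
        have Flip: "\<And>t. Suc t \<le> i \<Longrightarrow> F (r (Suc t)) \<le> Suc (F (r t)) \<and> F (r t) \<le> Suc (F (r (Suc t)))"
        proof -
          fix t assume "Suc t \<le> i"
          then have h: "r t \<in> H" "r (Suc t) \<in> H" using rH by auto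
          show "F (r (Suc t)) \<le> Suc (F (r t)) \<and> F (r t) \<le> Suc (F (r (Suc t)))"
          proof -
            have e1: "r t = r (Suc t) \<or> E (r t) (r (Suc t))" using rstep[of t] by metis
            have e2: "r (Suc t) = r t \<or> E (r (Suc t)) (r t)" using rstep[of t] sym by metis
            have "FF E H P (r (Suc t)) \<le> Suc (FF E H P (r t))"
              by (rule FF_lip[where E=E]) (use sym h e1 in blast)+
            moreover have "FF E H P (r t) \<le> Suc (FF E H P (r (Suc t)))"
              by (rule FF_lip[where E=E]) (use sym h e2 in blast)+
            ultimately show ?thesis unfolding F_def by blast
          qed
        qed
        have Tle: "\<And>t. TT r (Suc t) \<le> F (r t)" using TS by simp
        have Tstep: "\<And>t. t < i \<Longrightarrow> TT r t \<le> Suc (TT r (Suc t)) \<and> TT r (Suc t) \<le> Suc (TT r t)"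
        proof -
          fix t assume ti: "t < i"
          show "TT r t \<le> Suc (TT r (Suc t)) \<and> TT r (Suc t) \<le> Suc (TT r t)"
          proof (cases t)
            case 0 then show ?thesis using T0 TS by simp
          next
            case (Suc t')
            have "TT r t \<le> F (r t')" using Tle Suc by simp
            moreover have "F (r t') \<le> Suc (F (r t))" using Flip[of t'] Suc ti by simp
            ultimately show ?thesis using TS[of r t] by simp
          qed
        qed
        have Tconv: "\<And>t. t < i \<Longrightarrow> TT r (Suc t) = F (r t) \<or> TT r (Suc t) = Suc t"
        proof -
          fix t assume "t < i"
          then show "TT r (Suc t) = F (r t) \<or> TT r (Suc t) = Suc t"
          proof (induction t)
            case 0 then show ?case using T0 TS by (simp add: min_def)
          next
            case (Suc t)
            then have IH: "TT r (Suc t) = F (r t) \<or> TT r (Suc t) = Suc t" by simp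
            have fl: "F (r (Suc t)) \<le> Suc (F (r t))" using Flip[of t] Suc.prems by simp
            show ?case using IH fl TS[of r "Suc t"] by auto
          qed
        qed
        have form: "\<And>t. t \<le> i \<Longrightarrow> \<forall>j<5. cop_pos s5 r t j = P ! idx L (TT r t) j"
        proof -
          fix t assume "t \<le> i"
          then show "\<forall>j<5. cop_pos s5 r t j = P ! idx L (TT r t) j"
          proof (induction t)
            case 0 then show ?case using C0 T0 by simp
          next
            case (Suc t)
            then have ti: "t < i" by simp
            have IH: "\<forall>j<5. cop_pos s5 r t j = P ! idx L (TT r t) j" using Suc by simp
            have ncap: "\<not> captured_at 5 s5 r t" using nc ti by auto
            show ?case
            proof (intro allI impI)
              fix j :: nat assume j5: "j < 5"
              have n1: "cop_pos s5 r t j \<noteq> r t" "cop_pos s5 r (Suc t) j \<noteq> r t"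
                using ncap j5 unfolding captured_at_def by auto
              have ts: "TT r t \<le> Suc (TT r (Suc t)) \<and> TT r (Suc t) \<le> Suc (TT r t)" using Tstep ti by blast
              have i1: "idx L (TT r (Suc t)) j \<le> Suc (idx L (TT r t) j)"
                       "idx L (TT r t) j \<le> Suc (idx L (TT r (Suc t)) j)"
                using ts unfolding idx_def by auto
              have adj: "P ! idx L (TT r t) j = P ! idx L (TT r (Suc t)) j \<or>
                         E (P ! idx L (TT r t) j) (P ! idx L (TT r (Suc t)) j)"
                by (rule Padj[OF idxL idxL i1(1) i1(2)])
              have "\<not> (cop_pos s5 r t j = r t \<or> E (cop_pos s5 r t j) (r t))"
              proof
                assume "cop_pos s5 r t j = r t \<or> E (cop_pos s5 r t j) (r t)"
                then have "cop_pos s5 r (Suc t) j = r t" unfolding CS mv_def by simp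
                with n1 show False by simp
              qed
              then show "cop_pos s5 r (Suc t) j = P ! idx L (TT r (Suc t)) j"
                unfolding CS mv_def using IH j5 adj by auto
            qed
          qed
        qed
        have "\<phi> (r i) \<inter> \<pi> \<noteq> {} \<longrightarrow> captured_at 5 s5 r i"
        proof
          assume "\<phi> (r i) \<inter> \<pi> \<noteq> {}"
          then obtain z where z: "z \<in> \<phi> (r i)" "z \<in> \<pi>" by blast
          have "\<pi> \<subseteq> (\<Union>p\<in>set P. \<phi> p)" using sc unfolding shortest_curve_of_def by blast
          then obtain p where p: "p \<in> set P" "z \<in> \<phi> p" using z by blast
          then obtain j where j: "j < L" "p = P ! j" unfolding L_def by (metis in_set_conv_nth)
          have riV: "r i \<in> V" using rD assms(3) by blast
          have vj: "r i = P ! j \<or> E (r i) (P ! j)"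
            using Edef[of "r i" p] riV PV p z j by blast
          have FP: "F (r i) \<le> Suc j \<and> j \<le> Suc (F (r i))"
            unfolding F_def by (rule FF_path[OF sym sp H_def rH[OF order_refl] j(1)[unfolded L_def] vj])
          obtain m where m: "i = Suc m" using iL L1 by (cases i) auto
          have Fb: "F (r m) \<le> L - 1" unfolding F_def L_def by (rule FF_bound)
          have Ti: "TT r i = F (r m)"
            using Tconv[of m] m Tle[of m] Fb iL L1 by auto
          have fl: "F (r i) \<le> Suc (F (r m)) \<and> F (r m) \<le> Suc (F (r i))" using Flip[of m] m by simp
          define j' where "j' = j + 2 - TT r i"
          have j'5: "j' < 5" using FP fl Ti unfolding j'_def by arith
          have idxj: "idx L (TT r i) j' = j" using FP fl Ti j unfolding j'_def idx_def by arith
          have cj: "cop_pos s5 r i j' = P ! j" using form[of i] j'5 idxj by simp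
          have "P ! j = r i \<or> E (P ! j) (r i)" using vj sym by metis
          then have "cop_pos s5 r (Suc i) j' = r i" unfolding CS cj mv_def by simp
          then show "captured_at 5 s5 r i" unfolding captured_at_def using j'5 by blast
        qed
        then show ?thesis by blast
      qed
    qed
  qed
qed

end
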